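(* Let $k\ge 2$ and let $P=(p_1,\dots,p_k)$ and $Q=(q_1,\dots,q_k)$ be two multinomial (categorical) probability distributions over the same index set $\{1,\dots,k\}$. Suppose the indices of the largest probabilities of $P$ and $Q$ do not match, i.e. $\arg\max_i p_i \neq \arg\max_j q_j$. Then $$d_{KL}(Q,P)\;\ge\; -\log\bigl(2\sqrt{p_{(1)}p_{(2)}}+1-p_{(1)}-p_{(2)}\bigr),$$ where $p_{(1)}$ and $p_{(2)}$ denote the first and second largest probabilities among $p_1,\dots,p_k$.
   Context: The Kullback–Leibler divergence is $d_{KL}(Q,P)=\sum_{i=1}^k q_i\log\frac{q_i}{p_i}$ (with the usual conventions $0\log 0=0$, and $d_{KL}=+\infty$ if some $q_i>0=p_i$). *)

theory Defs
  imports "HOL-Analysis.Analysis"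
begin

definition is_prob_vec :: "nat \<Rightarrow> (nat \<Rightarrow> real) \<Rightarrow> bool" where
  "is_prob_vec k p \<longleftrightarrow> (\<forall>i\<in>{1..k}. 0 \<le> p i) \<and> (\<Sum>i=1..k. p i) = 1"

definition kl_div :: "nat \<Rightarrow> (nat \<Rightarrow> real) \<Rightarrow> (nat \<Rightarrow> real) \<Rightarrow> ereal" where
  "kl_div k q p =
     (if \<exists>i\<in>{1..k}. q i > 0 \<and> p i = 0 then PInfty
      else ereal (\<Sum>i=1..k. if q i = 0 then 0 else q i * ln (q i / p i)))"

text \<open>i-th largest value (0-based position in descending order, with multiplicity).\<close>
definition order_stat :: "nat \<Rightarrow> (nat \<Rightarrow> real) \<Rightarrow> nat \<Rightarrow> real" where
  "order_stat k p r = rev (sort (map p [1..<k+1])) ! r"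

definition neg_ln :: "real \<Rightarrow> ereal" where
  "neg_ln x = (if x \<le> 0 then PInfty else ereal (- ln x))"

end

theory Submission
  imports Defs
begin
lemma order_stat_facts:
  fixes k :: nat and p :: "nat \<Rightarrow> real" and i j :: nat
  assumes "k \<ge> 2" "i \<in> {1..k}" "\<forall>l\<in>{1..k}. p l \<le> p i" "j \<in> {1..k}" "i \<noteq> j"
  shows "order_stat k p 0 = p i \<and> p j \<le> order_stat k p 1"
proof -
  define U where "U = [1..<k+1]"
  define L where "L = map p U"
  define xs where "xs = rev (sort L)"
  have len: "length xs = k" by (simp add: xs_def L_def U_def)
  have sw: "sorted_wrt (\<ge>) xs" unfolding xs_def by (simp add: sorted_wrt_rev)
  have msx: "mset xs = mset L" by (simp add: xs_def)
  obtain a b rest where xs: "xs = a # b # rest"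
    using len assms(1) by (metis Suc_le_length_iff numeral_2_eq_2)
  have iU: "i \<in> set U" using assms by (auto simp: U_def)
  have jU: "j \<in> set (remove1 i U)" using assms by (auto simp: U_def)
  have "mset U = add_mset i (mset (remove1 i U))" using iU by simp
  hence mL: "mset L = add_mset (p i) (image_mset p (mset (remove1 i U)))"
    unfolding L_def mset_map by (metis image_mset_add_mset)
  have aset: "a \<in> set L" using msx xs by (metis list.set_intros(1) set_mset_mset)
  have "a \<le> p i" using aset assms by (auto simp: L_def U_def)
  moreover have "p i \<le> a" using sw xs mL msx
    by (metis iU L_def image_eqI list.set_intros(1) list.set_map set_ConsD
        set_mset_mset sorted_wrt.simps(2) set_remove1_subset order_refl)
  ultimately have ai: "a = p i" by simp
  have "mset (b # rest) = image_mset p (mset (remove1 i U))"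
    using mL msx xs ai by simp
  hence "p j \<in> set (b # rest)" using jU
    by (metis image_eqI set_image_mset set_mset_mset)
  hence "p j \<le> b" using sw xs by auto
  thus ?thesis using ai xs by (simp add: order_stat_def xs_def L_def U_def)
qed

theorem mainTheorem1:
  fixes k :: nat and p q :: "nat \<Rightarrow> real" and i j :: nat
  assumes "k \<ge> 2"
    and "is_prob_vec k p" and "is_prob_vec k q"
    and "i \<in> {1..k}" and "\<forall>l\<in>{1..k}. p l \<le> p i"
    and "j \<in> {1..k}" and "\<forall>l\<in>{1..k}. q l \<le> q j"
    and "i \<noteq> j"
  shows "kl_div k q p \<ge>
           neg_ln (2 * sqrt (order_stat k p 0 * order_stat k p 1) + 1
                   - order_stat k p 0 - order_stat k p 1)"
proof (cases "\<exists>l\<in>{1..k}. q l > 0 \<and> p l = 0")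
  case True
  thus ?thesis by (simp add: kl_div_def)
next
  case False
  define S where "S = {1..k::nat}"
  have fS: "finite S" by (simp add: S_def)
  have iS: "i \<in> S" and jS: "j \<in> S" using assms by (auto simp: S_def)
  have p0: "\<And>l. l \<in> S \<Longrightarrow> 0 \<le> p l" and ps: "(\<Sum>l\<in>S. p l) = 1"
    using assms(2) by (auto simp: is_prob_vec_def S_def)
  have q0: "\<And>l. l \<in> S \<Longrightarrow> 0 \<le> q l" and qs: "(\<Sum>l\<in>S. q l) = 1"
    using assms(3) by (auto simp: is_prob_vec_def S_def)
  have pq: "\<And>l. l \<in> S \<Longrightarrow> q l > 0 \<Longrightarrow> p l > 0"
    using False p0 unfolding S_def by force
  have qj: "q j > 0"
  proof (rule ccontr)
    assume "\<not> q j > 0"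
    hence "\<forall>l\<in>S. q l \<le> 0" using assms(7) unfolding S_def by force
    hence "(\<Sum>l\<in>S. q l) \<le> 0" by (simp add: sum_nonpos)
    thus False using qs by simp
  qed
  have pj: "p j > 0" using pq[OF jS qj] .
  have pji: "p j \<le> p i" using assms jS unfolding S_def by auto
  have pi: "p i > 0" using pj pji by simp
  have qij: "q i \<le> q j" using assms iS unfolding S_def by auto
  define a where "a = sqrt (p j / p i)"
  have a0: "a > 0" using pi pj by (simp add: a_def)
  have a1: "a \<le> 1" using pi pji by (simp add: a_def)
  define g where "g l = (if l = i then a else if l = j then 1 / a else 1)" for l
  have g0: "\<And>l. g l > 0" using a0 by (simp add: g_def)
  define Z where "Z = (\<Sum>l\<in>S. p l * g l)"
  have pia: "p i * a = sqrt (p i * p j)"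
    using pi pj by (simp add: a_def real_sqrt_divide real_sqrt_mult field_simps)
  have pja: "p j / a = sqrt (p i * p j)"
    using pi pj by (simp add: a_def real_sqrt_divide real_sqrt_mult field_simps)
  have "\<And>l. p l * g l = p l + (if l = i then p i * a - p i else 0)
      + (if l = j then p j / a - p j else 0)"
    using assms(8) by (simp add: g_def)
  hence "Z = (\<Sum>l\<in>S. p l) + (p i * a - p i) + (p j / a - p j)"
    unfolding Z_def using fS iS jS by (simp add: sum.distrib)
  hence Zeq: "Z = 2 * sqrt (p i * p j) + 1 - p i - p j" using ps pia pja by simp
  have Zpos: "Z > 0"
  proof -
    have "p i * g i \<le> Z" unfolding Z_def
      using fS iS p0 g0 by (intro member_le_sum) (auto intro: less_imp_le mult_nonneg_nonneg)
    moreover have "p i * g i > 0" using pi g0 by simp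
    ultimately show ?thesis by simp
  qed
  define T where "T l = (if q l = 0 then 0 else q l * ln (q l / p l))" for l
  have tbound: "T l \<ge> q l * ln (g l) - q l * ln Z + q l - p l * g l / Z" if lS: "l \<in> S" for l
  proof (cases "q l = 0")
    case True
    thus ?thesis using p0[OF lS] g0[of l] Zpos by (simp add: T_def)
  next
    case False
    hence ql: "q l > 0" using q0[OF lS] by simp
    have pl: "p l > 0" using pq[OF lS ql] .
    define x where "x = q l * Z / (p l * g l)"
    have x0: "x > 0" using ql pl Zpos g0[of l] by (simp add: x_def)
    have "ln (1/x) \<le> 1/x - 1" using x0 by (intro ln_le_minus_one) simp
    hence lx: "ln x \<ge> 1 - 1/x" using x0 by (simp add: ln_div)
    have "ln x = ln (q l / p l) + ln Z - ln (g l)"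
      using ql pl Zpos g0[of l] by (simp add: x_def ln_div ln_mult)
    hence "ln (q l / p l) \<ge> ln (g l) - ln Z + 1 - p l * g l / (Z * q l)"
      using lx ql Zpos by (simp add: x_def mult.commute)
    hence "q l * ln (q l / p l) \<ge> q l * (ln (g l) - ln Z + 1 - p l * g l / (Z * q l))"
      using ql by (intro mult_left_mono) auto
    thus ?thesis using False ql Zpos by (simp add: T_def algebra_simps)
  qed
  have "(\<Sum>l\<in>S. T l) \<ge> (\<Sum>l\<in>S. q l * ln (g l) - q l * ln Z + q l - p l * g l / Z)"
    using tbound by (intro sum_mono) auto
  also have "(\<Sum>l\<in>S. q l * ln (g l) - q l * ln Z + q l - p l * g l / Z)
     = (\<Sum>l\<in>S. q l * ln (g l)) - ln Z * (\<Sum>l\<in>S. q l) + (\<Sum>l\<in>S. q l) - (\<Sum>l\<in>S. p l * g l) / Z"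
    by (simp add: sum.distrib sum_subtractf sum_distrib_left sum_divide_distrib algebra_simps)
  also have "\<dots> = (\<Sum>l\<in>S. q l * ln (g l)) - ln Z"
    using qs Zpos by (simp add: Z_def)
  finally have KL1: "(\<Sum>l\<in>S. T l) \<ge> (\<Sum>l\<in>S. q l * ln (g l)) - ln Z" .
  have "\<And>l. q l * ln (g l) = (if l = i then q i * ln a else 0) + (if l = j then - q j * ln a else 0)"
    using assms(8) a0 by (simp add: g_def ln_div)
  hence "(\<Sum>l\<in>S. q l * ln (g l)) = (q i - q j) * ln a"
    using fS iS jS by (simp add: sum.distrib algebra_simps)
  also have "\<dots> \<ge> 0" using qij a0 a1 by (intro mult_nonpos_nonpos) auto
  finally have KL2: "(\<Sum>l\<in>S. T l) \<ge> - ln Z" using KL1 by simp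
  obtain p1 p2 where p1: "order_stat k p 0 = p1" and p2: "order_stat k p 1 = p2" by blast
  from order_stat_facts[OF assms(1,4,5,6,8)] p1 p2 have p1i: "p1 = p i" and p2j: "p j \<le> p2" by auto
  have p2le: "p2 \<le> p1"
  proof -
    have "p2 = rev (sort (map p [1..<k+1])) ! 1" using p2 by (simp add: order_stat_def)
    also have "\<dots> \<in> set (map p [1..<k+1])"
      using assms(1) by (metis length_map length_rev length_sort length_upt nth_mem
          set_rev set_sort diff_zero add_diff_cancel_right' Suc_1 Suc_le_lessD)
    finally have "p2 \<in> p ` {1..k}" by auto
    thus ?thesis using assms(5) p1i by auto
  qed
  define Zs where "Zs = 2 * sqrt (p1 * p2) + 1 - p1 - p2"
  have "Z \<le> Zs"
  proof -
    have e1: "2 * sqrt (p i * p j) - p i - p j = - ((sqrt (p i) - sqrt (p j))^2)"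
      using pi pj by (simp add: power2_eq_square real_sqrt_mult algebra_simps)
    have p20: "p2 \<ge> 0" using pj p2j by simp
    have e2: "2 * sqrt (p1 * p2) - p1 - p2 = - ((sqrt p1 - sqrt p2)^2)"
      using pi p20 p1i by (simp add: power2_eq_square real_sqrt_mult algebra_simps)
    have s1: "sqrt p2 \<le> sqrt p1" using p2le by simp
    have s2: "sqrt (p j) \<le> sqrt p2" using p2j by simp
    have "(sqrt p1 - sqrt p2)^2 \<le> (sqrt (p i) - sqrt (p j))^2"
      using s1 s2 p1i by (intro power_mono) auto
    thus ?thesis using e1 e2 Zeq unfolding Zs_def by linarith
  qed
  hence "- ln Zs \<le> - ln Z" using Zpos by simp
  hence "- ln Zs \<le> (\<Sum>l\<in>S. T l)" using KL2 by linarith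
  moreover have "kl_div k q p = ereal (\<Sum>l\<in>S. T l)"
    using False by (simp add: kl_div_def S_def T_def)
  moreover have "neg_ln Zs = ereal (- ln Zs)" using Zpos \<open>Z \<le> Zs\<close>
    by (simp add: neg_ln_def)
  ultimately show ?thesis unfolding p1 p2 Zs_def[symmetric] by simp
qed

end
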